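(* Let $\Lambda=\operatorname{diag}(1,2)$. Among all $2\times2$ unimodular zerofree matrices $M$ such that $M\Lambda M^{-1}$ is also zerofree, the minimum of $\|M\Lambda M^{-1}\|$ is $4$, attained by $M=\begin{pmatrix}1&2\\1&3\end{pmatrix}$, for which $M\Lambda M^{-1}=\begin{pmatrix}-1&2\\-3&4\end{pmatrix}$.
   Context: A square integer matrix is unimodular if its determinant is $\pm1$. An invertible matrix $Z$ is zerofree if none of the entries of $Z$ and none of the entries of $Z^{-1}$ is zero. For a matrix $A$, $\|A\|$ denotes the maximum of the absolute values of its entries. *)

theory Defs
  imports "HOL-Analysis.Analysis"
begin

definition integer_matrix :: "real ^'n ^'n \<Rightarrow> bool" where
  "integer_matrix A \<longleftrightarrow> (\<forall>i j. A $ i $ j \<in> \<int>)"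

definition unimodular :: "real ^'n ^'n \<Rightarrow> bool" where
  "unimodular A \<longleftrightarrow> integer_matrix A \<and> (det A = 1 \<or> det A = -1)"

definition zerofree :: "real ^'n ^'n \<Rightarrow> bool" where
  "zerofree Z \<longleftrightarrow> invertible Z \<and> (\<forall>i j. Z $ i $ j \<noteq> 0) \<and>
     (\<forall>i j. matrix_inv Z $ i $ j \<noteq> 0)"

definition maxnorm :: "real ^'n ^'n \<Rightarrow> real" where
  "maxnorm A = Max {\<bar>A $ i $ j\<bar> | i j. True}"

definition Lam :: "real ^2 ^2" where
  "Lam = (\<chi> i j. if i = j then (if i = 1 then 1 else 2) else 0)"

definition M0 :: "real ^2 ^2" where
  "M0 = (\<chi> i j. if i = 1 then (if j = 1 then 1 else 2) else (if j = 1 then 1 else 3))"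

definition C0 :: "real ^2 ^2" where
  "C0 = (\<chi> i j. if i = 1 then (if j = 1 then -1 else 2) else (if j = 1 then -3 else 4))"

definition admissible :: "real ^2 ^2 \<Rightarrow> bool" where
  "admissible M \<longleftrightarrow> unimodular M \<and> zerofree M \<and> zerofree (M ** Lam ** matrix_inv M)"

end

theory Submission
  imports Defs
begin

lemma matrix_inv_eqI:
  fixes A B :: "real^'n^'n"
  assumes "A ** B = mat 1" "B ** A = mat 1"
  shows "matrix_inv A = B"
proof -
  have "\<And>A'. A ** A' = mat 1 \<and> A' ** A = mat 1 \<Longrightarrow> A' = B"
    by (metis assms(1) matrix_mul_assoc matrix_mul_lid matrix_mul_rid)
  then show ?thesis unfolding matrix_inv_def
    by (metis (mono_tags, lifting) assms someI_ex)
qed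

lemma aux2: "(p::real) \<noteq> q \<Longrightarrow> p*p + q*q \<noteq> 2*p*q"
proof
  assume "p \<noteq> q" "p*p + q*q = 2*p*q"
  then have "(p-q)*(p-q) = 0" by (simp add: algebra_simps)
  then show False using \<open>p \<noteq> q\<close> by simp
qed

lemma aux3: "(x11::real)*x22 \<noteq> x12*x21 \<Longrightarrow> x11*(x11*(x22*x22)) + x12*(x12*(x21*x21)) \<noteq> 2*(x11*(x12*(x21*x22)))"
  using aux2[of "x11*x22" "x12*x21"] by (simp add: algebra_simps)

definition adj2 :: "real^2^2 \<Rightarrow> real^2^2" where
  "adj2 A = (\<chi> i j. (if i = 1 then (if j = 1 then A$2$2 else - A$1$2)
                    else (if j = 1 then - A$2$1 else A$1$1)) / (A$1$1*A$2$2 - A$1$2*A$2$1))"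

lemma inv2:
  fixes A :: "real^2^2"
  assumes "det A \<noteq> 0"
  shows "matrix_inv A = adj2 A"
proof (rule matrix_inv_eqI)
  show "A ** adj2 A = mat 1" using assms aux3[of "A$1$1" "A$2$2" "A$1$2" "A$2$1"]
    by (simp add: adj2_def matrix_matrix_mult_def vec_eq_iff forall_2 sum_2 mat_def det_2 divide_simps algebra_simps)
  show "adj2 A ** A = mat 1" using assms aux3[of "A$1$1" "A$2$2" "A$1$2" "A$2$1"]
    by (simp add: adj2_def matrix_matrix_mult_def vec_eq_iff forall_2 sum_2 mat_def det_2 divide_simps algebra_simps)
qed

lemma maxnorm_ge:
  fixes A :: "real^'n^'n"
  shows "\<bar>A$i$j\<bar> \<le> maxnorm A"
proof -
  have "{\<bar>A $ i $ j\<bar> | i j. True} = (\<lambda>(i,j). \<bar>A $ i $ j\<bar>) ` UNIV" by auto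
  then have "finite {\<bar>A $ i $ j\<bar> | i j. True}" by simp
  then show ?thesis unfolding maxnorm_def by (rule Max_ge) auto
qed

lemma key:
  fixes a b c d :: int
  assumes "a \<noteq> 0" "d \<noteq> 0" "b \<noteq> 0" "c \<noteq> 0" "a*d - b*c = e" "e = 1 \<or> e = -1"
    "a*d - 2*b*c \<noteq> 0" "2*a*d - b*c \<noteq> 0"
  shows "\<bar>a*d - 2*b*c\<bar> \<ge> 4 \<or> \<bar>2*a*d - b*c\<bar> \<ge> 4"
proof (rule ccontr)
  assume h: "\<not> ?thesis"
  define x where "x = b*c"
  have ad: "a*d = e + x" using assms(5) x_def by simp
  have "a*d \<noteq> 0" using assms(1,2) by simp
  then have "x \<noteq> -e" using ad by simp
  have "\<bar>e - x\<bar> < 4" "\<bar>2*e + x\<bar> < 4" "e - x \<noteq> 0" "2*e+x \<noteq> 0"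
    using h assms(7,8) ad x_def by (auto simp: algebra_simps)
  moreover have "x \<noteq> 0" using assms(3,4) x_def by simp
  ultimately show False using assms(6) \<open>x \<noteq> -e\<close> by auto
qed

lemma C0_entries: "C0 $ 1 $ 1 = -1" "C0 $ 1 $ 2 = 2" "C0 $ 2 $ 1 = -3" "C0 $ 2 $ 2 = 4"
  by (simp_all add: C0_def)

theorem mainTheorem7:
  shows "(\<forall>M. admissible M \<longrightarrow> maxnorm (M ** Lam ** matrix_inv M) \<ge> 4)
    \<and> admissible M0
    \<and> M0 ** Lam ** matrix_inv M0 = C0
    \<and> maxnorm C0 = 4"
proof (intro conjI allI impI)
  have dM0: "det M0 = 1" by (simp add: det_2 M0_def)
  have iM0: "matrix_inv M0 = (\<chi> i j. if i = 1 then (if j = 1 then 3 else -2) else (if j = 1 then -1 else 1))"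
    using inv2[of M0] dM0 by (simp add: adj2_def M0_def vec_eq_iff forall_2)
  show C: "M0 ** Lam ** matrix_inv M0 = C0"
    unfolding iM0 by (simp add: matrix_matrix_mult_def vec_eq_iff forall_2 sum_2 Lam_def M0_def C0_def)
  show "maxnorm C0 = 4"
  proof -
    have "{\<bar>C0 $ i $ j\<bar> | i j. True} = {\<bar>C0$1$1\<bar>, \<bar>C0$1$2\<bar>, \<bar>C0$2$1\<bar>, \<bar>C0$2$2\<bar>}"
    proof (rule set_eqI, rule iffI)
      fix x assume "x \<in> {\<bar>C0 $ i $ j\<bar> | i j. True}"
      then obtain i j where "x = \<bar>C0 $ i $ j\<bar>" by blast
      then show "x \<in> {\<bar>C0$1$1\<bar>, \<bar>C0$1$2\<bar>, \<bar>C0$2$1\<bar>, \<bar>C0$2$2\<bar>}"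
        using exhaust_2[of i] exhaust_2[of j] by auto
    qed blast
    also have "\<dots> = {1,2,3,4}" by (simp add: C0_entries insert_commute)
    finally show ?thesis unfolding maxnorm_def by simp
  qed
  show "admissible M0"
    unfolding admissible_def
  proof (intro conjI)
    show "unimodular M0" unfolding unimodular_def integer_matrix_def using dM0
      by (auto simp: M0_def)
    have "invertible M0" using dM0 by (simp add: invertible_det_nz)
    then show "zerofree M0" unfolding zerofree_def iM0
      by (auto simp: M0_def)
    have dC0: "det C0 = 2" by (simp add: det_2 C0_def)
    have iC0: "matrix_inv C0 = adj2 C0" using inv2 dC0 by simp
    have "invertible C0" using dC0 by (simp add: invertible_det_nz)
    then show "zerofree (M0 ** Lam ** matrix_inv M0)" unfolding zerofree_def iC0 C
      by (auto simp: C0_def adj2_def)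
  qed
next
  fix M :: "real^2^2"
  assume adm: "admissible M"
  define a where "a = M$1$1"
  define b where "b = M$1$2"
  define c where "c = M$2$1"
  define d where "d = M$2$2"
  have dM: "det M = a*d - b*c" by (simp add: det_2 a_def b_def c_def d_def)
  have uni: "unimodular M" "zerofree M" "zerofree (M ** Lam ** matrix_inv M)"
    using adm unfolding admissible_def by auto
  have de: "a*d - b*c = 1 \<or> a*d - b*c = -1" using uni(1) dM unfolding unimodular_def by simp
  then have "det M \<noteq> 0" using dM by auto
  then have iM: "matrix_inv M = adj2 M" by (rule inv2)
  define C where "C = M ** Lam ** matrix_inv M"
  have D0: "a*d - b*c \<noteq> 0" using de by auto
  have MLam: "\<And>i k. (M ** Lam) $ i $ k = M $ i $ k * (if k = 1 then 1 else 2)"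
    by (simp add: matrix_matrix_mult_def sum_2 Lam_def) (metis exhaust_2)
  have C11: "C$1$1 = (a*d - 2*b*c) / (a*d-b*c)"
    unfolding C_def iM matrix_matrix_mult_def[of "M ** Lam"] using D0
    by (simp add: MLam sum_2 adj2_def a_def b_def c_def d_def divide_simps)
  have C22: "C$2$2 = (2*a*d - b*c) / (a*d-b*c)"
    unfolding C_def iM matrix_matrix_mult_def[of "M ** Lam"] using D0
    by (simp add: MLam sum_2 adj2_def a_def b_def c_def d_def divide_simps)
  have nz: "a \<noteq> 0" "b \<noteq> 0" "c \<noteq> 0" "d \<noteq> 0"
    using uni(2) unfolding zerofree_def a_def b_def c_def d_def by auto
  have nzC: "C$1$1 \<noteq> 0" "C$2$2 \<noteq> 0" using uni(3) unfolding zerofree_def C_def by auto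
  have ints: "a \<in> \<int>" "b \<in> \<int>" "c \<in> \<int>" "d \<in> \<int>"
    using uni(1) unfolding unimodular_def integer_matrix_def a_def b_def c_def d_def by auto
  obtain a' b' c' d' where ab: "a = of_int a'" "b = of_int b'" "c = of_int c'" "d = of_int d'"
    using ints by (metis Ints_cases)
  have e1: "real_of_int (a'*d' - b'*c') = a*d - b*c" by (simp add: ab)
  have e2: "real_of_int (a'*d' - 2*b'*c') = a*d - 2*b*c" by (simp add: ab)
  have e3: "real_of_int (2*a'*d' - b'*c') = 2*a*d - b*c" by (simp add: ab)
  have "\<bar>a'*d' - 2*b'*c'\<bar> \<ge> 4 \<or> \<bar>2*a'*d' - b'*c'\<bar> \<ge> 4"
  proof (rule key[of a' d' b' c' "a'*d' - b'*c'"])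
    show "a' \<noteq> 0" "d' \<noteq> 0" "b' \<noteq> 0" "c' \<noteq> 0" using nz ab by auto
    show "a'*d' - b'*c' = a'*d' - b'*c'" by simp
    show "a'*d' - b'*c' = 1 \<or> a'*d' - b'*c' = -1" using de unfolding e1[symmetric]
      by (metis of_int_eq_1_iff of_int_eq_iff of_int_minus)
    have "a*d - 2*b*c \<noteq> 0" using nzC C11 by auto
    then show "a'*d' - 2*b'*c' \<noteq> 0" unfolding e2[symmetric] by (metis of_int_0)
    have "2*a*d - b*c \<noteq> 0" using nzC C22 by auto
    then show "2*a'*d' - b'*c' \<noteq> 0" unfolding e3[symmetric] by (metis of_int_0)
  qed
  then have "real_of_int \<bar>a'*d' - 2*b'*c'\<bar> \<ge> 4 \<or> real_of_int \<bar>2*a'*d' - b'*c'\<bar> \<ge> 4"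
    by linarith
  then have "\<bar>a*d - 2*b*c\<bar> \<ge> 4 \<or> \<bar>2*a*d - b*c\<bar> \<ge> 4"
    unfolding of_int_abs e2 e3 .
  moreover have "\<bar>C$1$1\<bar> = \<bar>a*d - 2*b*c\<bar>" "\<bar>C$2$2\<bar> = \<bar>2*a*d - b*c\<bar>"
    using C11 C22 de by auto
  ultimately show "maxnorm (M ** Lam ** matrix_inv M) \<ge> 4"
    using maxnorm_ge[of C 1 1] maxnorm_ge[of C 2 2] unfolding C_def by linarith
qed

end
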